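(* Let $E$ be finite, $\Omega=E^{\mathbb{Z}}$ with left shift $S$, and let $\phi:\Omega\to\mathbb{R}$ be continuous with the extensibility property. Then for every pair $\xi,\eta\in\Omega$ such that $\{k\in\mathbb{Z}:\xi_k\ne\eta_k\}$ is finite, the sequence $\rho_n(\xi,\eta)=\sum_{i=-n}^{n}[\phi(S^i\xi)-\phi(S^i\eta)]$, $n\ge0$, converges; denote the limit by $\rho(\xi,\eta)$. Moreover: (1) $\rho$ is a cocycle: for all $\xi,\eta,\zeta\in\Omega$ with $\xi_i=\eta_i=\zeta_i$ for all but finitely many $i$, $\rho(\xi,\zeta)=\rho(\xi,\eta)+\rho(\eta,\zeta)$; (2) $\rho$ is translation-invariant: $\rho(\xi,\eta)=\rho(S\xi,S\eta)$ whenever $\{k:\xi_k\ne\eta_k\}$ is finite; (3) for every finite $\Lambda\subset\mathbb{Z}$ and all $\eta_\Lambda,\zeta_\Lambda\in E^\Lambda$, the map $\xi\mapsto\rho(\eta_\Lambda\xi_{\mathbb{Z}\setminus\Lambda},\zeta_\Lambda\xi_{\mathbb{Z}\setminus\Lambda})$ is continuous on $\Omega$.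
   Context: $E$ is finite with discrete topology, $\Omega=E^{\mathbb{Z}}$ has the product topology, $(S\omega)_i=\omega_{i+1}$. For $\omega\in\Omega$, $a\in E$, $\omega^a$ is the configuration equal to $a$ at site $0$ and to $\omega_k$ at $k\ne0$. A continuous $\phi$ has the extensibility property if for all $a,\tilde a\in E$ the functions $\sum_{i=-n}^{n}[\phi(S^i\omega^a)-\phi(S^i\omega^{\tilde a})]$ converge uniformly in $\omega\in\Omega$ as $n\to\infty$. For finite $\Lambda$, $\eta_\Lambda\xi_{\mathbb{Z}\setminus\Lambda}$ denotes the configuration equal to $\eta$ on $\Lambda$ and to $\xi$ off $\Lambda$. *)

theory Defs
  imports "HOL-Analysis.Analysis"
begin

definition Omega_top :: "(int \<Rightarrow> 'e) topology" where
  "Omega_top = product_topology (\<lambda>_. discrete_topology UNIV) UNIV"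

definition shift_pow :: "int \<Rightarrow> (int \<Rightarrow> 'e) \<Rightarrow> (int \<Rightarrow> 'e)" where
  "shift_pow i w = (\<lambda>k. w (k + i))"

definition shift :: "(int \<Rightarrow> 'e) \<Rightarrow> (int \<Rightarrow> 'e)" where
  "shift w = (\<lambda>k. w (k + 1))"

definition set0 :: "(int \<Rightarrow> 'e) \<Rightarrow> 'e \<Rightarrow> (int \<Rightarrow> 'e)" where
  "set0 w a = w(0 := a)"

definition extensible :: "((int \<Rightarrow> 'e) \<Rightarrow> real) \<Rightarrow> bool" where
  "extensible phi \<longleftrightarrow> (\<forall>a b. uniformly_convergent_on UNIV
      (\<lambda>(n::nat) w. \<Sum>i\<in>{- int n..int n}. phi (shift_pow i (set0 w a)) - phi (shift_pow i (set0 w b))))"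

definition rho_n :: "((int \<Rightarrow> 'e) \<Rightarrow> real) \<Rightarrow> (int \<Rightarrow> 'e) \<Rightarrow> (int \<Rightarrow> 'e) \<Rightarrow> nat \<Rightarrow> real" where
  "rho_n phi xi eta n = (\<Sum>i\<in>{- int n..int n}. phi (shift_pow i xi) - phi (shift_pow i eta))"

definition rho :: "((int \<Rightarrow> 'e) \<Rightarrow> real) \<Rightarrow> (int \<Rightarrow> 'e) \<Rightarrow> (int \<Rightarrow> 'e) \<Rightarrow> real" where
  "rho phi xi eta = lim (rho_n phi xi eta)"

definition glue :: "int set \<Rightarrow> (int \<Rightarrow> 'e) \<Rightarrow> (int \<Rightarrow> 'e) \<Rightarrow> (int \<Rightarrow> 'e)" where
  "glue L eta xi = (\<lambda>k. if k \<in> L then eta k else xi k)"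

end

theory Submission
  imports Defs
begin


lemma phi_unif:
  fixes phi :: "(int \<Rightarrow> 'e::finite) \<Rightarrow> real"
  assumes cont: "continuous_map Omega_top euclideanreal phi" and e: "e > 0"
  shows "\<exists>N::int. \<forall>x y. (\<forall>k. \<bar>k\<bar> \<le> N \<longrightarrow> x k = y k) \<longrightarrow> \<bar>phi x - phi y\<bar> < e"
proof -
  have top: "topspace Omega_top = (UNIV :: (int \<Rightarrow> 'e) set)"
    by (simp add: Omega_top_def)
  have "\<exists>F. finite F \<and> (\<forall>y. (\<forall>i\<in>F. y i = x i) \<longrightarrow> \<bar>phi y - phi x\<bar> < e/2)" for x
  proof -
    have "openin Omega_top {y \<in> topspace Omega_top. phi y \<in> ball (phi x) (e/2)}"
      by (rule openin_continuous_map_preimage[OF cont]) simp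
    then have op: "openin Omega_top {y. \<bar>phi y - phi x\<bar> < e/2}"
      by (simp add: top dist_real_def abs_minus_commute)
    have xin: "x \<in> {y. \<bar>phi y - phi x\<bar> < e/2}" using e by simp
    from bspec[OF op[unfolded Omega_top_def openin_product_topology_alt topspace_discrete_topology] xin]
    obtain U where U0: "finite {i \<in> UNIV. U i \<noteq> UNIV}" "x \<in> Pi\<^sub>E UNIV U"
       "Pi\<^sub>E UNIV U \<subseteq> {y. \<bar>phi y - phi x\<bar> < e/2}"
      by (elim exE conjE) 
    have U: "finite {i. U i \<noteq> UNIV}" "x \<in> Pi\<^sub>E UNIV U"
       "Pi\<^sub>E UNIV U \<subseteq> {y. \<bar>phi y - phi x\<bar> < e/2}" using U0 by simp_all
    show ?thesis
    proof (intro exI conjI allI impI)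
      show "finite {i. U i \<noteq> UNIV}" by fact
      fix y assume y: "\<forall>i\<in>{i. U i \<noteq> UNIV}. y i = x i"
      have "y \<in> Pi\<^sub>E UNIV U"
        using U(2) y by (auto simp: PiE_iff) (metis UNIV_I)
      then show "\<bar>phi y - phi x\<bar> < e/2" using U(3) by auto
    qed
  qed
  then obtain F where F: "\<And>x. finite (F x)" "\<And>x y. (\<forall>i\<in>F x. y i = x i) \<Longrightarrow> \<bar>phi y - phi x\<bar> < e/2"
    by metis
  define B where "B x = {y::int\<Rightarrow>'e. \<forall>i\<in>F x. y i = x i}" for x
  have Bopen: "openin Omega_top (B x)" for x
  proof -
    have eq: "B x = Pi\<^sub>E UNIV (\<lambda>i. if i \<in> F x then {x i} else UNIV)"
      by (auto simp: B_def PiE_iff split: if_splits)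
    have "finite {i. (if i \<in> F x then {x i} else UNIV) \<noteq> UNIV}"
      by (rule finite_subset[OF _ F(1)[of x]]) auto
    then show ?thesis unfolding eq Omega_top_def
      by (subst openin_PiE_gen) auto
  qed
  have "compact_space (Omega_top :: (int \<Rightarrow> 'e) topology)"
    unfolding Omega_top_def
    by (simp add: compact_space_product_topology compact_space_discrete_topology)
  then have "compactin Omega_top (UNIV :: (int \<Rightarrow> 'e) set)" by (simp add: compact_space_def top)
  moreover have "UNIV \<subseteq> \<Union> (B ` UNIV)" by (auto simp: B_def)
  ultimately obtain G where G: "finite G" "G \<subseteq> B ` UNIV" "UNIV \<subseteq> \<Union>G"
    unfolding compactin_def using Bopen by (metis (no_types, lifting) imageE)
  then obtain C where C: "finite C" "G = B ` C"
    by (meson finite_subset_image)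
  define N where "N = Max (insert 0 (abs ` \<Union>(F ` C)))"
  have finU: "finite (\<Union>(F ` C))" using C F(1) by auto
  have Nb: "\<bar>k\<bar> \<le> N" if "k \<in> F c" "c \<in> C" for k c
    unfolding N_def using finU that by (intro Max_ge) auto
  show ?thesis
  proof (intro exI allI impI)
    fix x y :: "int \<Rightarrow> 'e" assume agree: "\<forall>k. \<bar>k\<bar> \<le> N \<longrightarrow> x k = y k"
    obtain c where c: "c \<in> C" "x \<in> B c" using G C by blast
    have "y \<in> B c" unfolding B_def
    proof (intro CollectI ballI)
      fix i assume i: "i \<in> F c"
      then have "\<bar>i\<bar> \<le> N" using Nb c(1) by blast
      then have "y i = x i" using agree by simp
      moreover have "x i = c i" using c(2) i unfolding B_def by blast
      ultimately show "y i = c i" by simp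
    qed
    then have "\<bar>phi y - phi c\<bar> < e/2" using F(2) B_def by auto
    moreover have "\<bar>phi x - phi c\<bar> < e/2" using c F(2) B_def by auto
    ultimately show "\<bar>phi x - phi y\<bar> < e" by linarith
  qed
qed



definition ucauchy :: "(nat \<Rightarrow> 'c \<Rightarrow> real) \<Rightarrow> bool" where
  "ucauchy f \<longleftrightarrow> (\<forall>e>0. \<exists>N. \<forall>m\<ge>N. \<forall>n\<ge>N. \<forall>c. \<bar>f m c - f n c\<bar> < e)"

lemma ucauchy_add_null:
  assumes f: "ucauchy f" and h: "\<And>e. e > 0 \<Longrightarrow> \<exists>N. \<forall>n\<ge>N. \<forall>c. \<bar>h n c\<bar> < e"
  shows "ucauchy (\<lambda>n c. f n c + h n c)"
  unfolding ucauchy_def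
proof (intro allI impI)
  fix e :: real assume e: "e > 0"
  obtain N1 where N1: "\<forall>m\<ge>N1. \<forall>n\<ge>N1. \<forall>c. \<bar>f m c - f n c\<bar> < e/3"
    using f e unfolding ucauchy_def by (meson divide_pos_pos zero_less_numeral)
  obtain N2 where N2: "\<forall>n\<ge>N2. \<forall>c. \<bar>h n c\<bar> < e/3" using h[of "e/3"] e by auto
  show "\<exists>N. \<forall>m\<ge>N. \<forall>n\<ge>N. \<forall>c. \<bar>f m c + h m c - (f n c + h n c)\<bar> < e"
  proof (intro exI allI impI)
    fix m n c assume "max N1 N2 \<le> m" "max N1 N2 \<le> n"
    then have "\<bar>f m c - f n c\<bar> < e/3" "\<bar>h m c\<bar> < e/3" "\<bar>h n c\<bar> < e/3" using N1 N2 by auto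
    then show "\<bar>f m c + h m c - (f n c + h n c)\<bar> < e" by linarith
  qed
qed

lemma ucauchy_add:
  assumes f: "ucauchy f" and g: "ucauchy g"
  shows "ucauchy (\<lambda>n c. f n c + g n c)"
  unfolding ucauchy_def
proof (intro allI impI)
  fix e :: real assume e: "e > 0"
  obtain N1 where N1: "\<forall>m\<ge>N1. \<forall>n\<ge>N1. \<forall>c. \<bar>f m c - f n c\<bar> < e/2"
    using f e unfolding ucauchy_def by (meson half_gt_zero)
  obtain N2 where N2: "\<forall>m\<ge>N2. \<forall>n\<ge>N2. \<forall>c. \<bar>g m c - g n c\<bar> < e/2"
    using g e unfolding ucauchy_def by (meson half_gt_zero)
  show "\<exists>N. \<forall>m\<ge>N. \<forall>n\<ge>N. \<forall>c. \<bar>f m c + g m c - (f n c + g n c)\<bar> < e"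
  proof (intro exI allI impI)
    fix m n c assume "max N1 N2 \<le> m" "max N1 N2 \<le> n"
    then have "\<bar>f m c - f n c\<bar> < e/2" "\<bar>g m c - g n c\<bar> < e/2" using N1 N2 by auto
    then show "\<bar>f m c + g m c - (f n c + g n c)\<bar> < e" by linarith
  qed
qed

lemma ucauchy_comp: "ucauchy f \<Longrightarrow> ucauchy (\<lambda>n c. f n (k c))"
  unfolding ucauchy_def by meson

lemma ucauchy_conv:
  assumes "ucauchy f" shows "convergent (\<lambda>n. f n c)"
proof -
  have "Cauchy (\<lambda>n. f n c)"
    unfolding Cauchy_def dist_real_def using assms unfolding ucauchy_def by meson
  then show ?thesis by (simp add: Cauchy_convergent_iff)
qed

lemma ucauchy_unif:
  assumes f: "ucauchy f" and e: "e > 0"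
  shows "\<exists>N. \<forall>n\<ge>N. \<forall>c. \<bar>f n c - lim (\<lambda>n. f n c)\<bar> < e"
proof -
  obtain N where N: "\<forall>m\<ge>N. \<forall>n\<ge>N. \<forall>c. \<bar>f m c - f n c\<bar> < e/2"
    using f e unfolding ucauchy_def by (meson half_gt_zero)
  show ?thesis
  proof (intro exI allI impI)
    fix n c assume n: "N \<le> n"
    have lim: "(\<lambda>m. f m c) \<longlonglongrightarrow> lim (\<lambda>m. f m c)"
      using ucauchy_conv[OF f] convergent_LIMSEQ_iff by blast
    have "(\<lambda>m. \<bar>f n c - f m c\<bar>) \<longlonglongrightarrow> \<bar>f n c - lim (\<lambda>m. f m c)\<bar>"
      by (intro tendsto_intros lim)
    moreover have "\<forall>\<^sub>F m in sequentially. \<bar>f n c - f m c\<bar> \<le> e/2"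
      unfolding eventually_sequentially
    proof (intro exI allI impI)
      fix m assume "N \<le> m"
      then have "\<bar>f n c - f m c\<bar> < e/2" using N n by blast
      then show "\<bar>f n c - f m c\<bar> \<le> e/2" by simp
    qed
    ultimately have "\<bar>f n c - lim (\<lambda>m. f m c)\<bar> \<le> e/2"
      by (rule tendsto_upperbound) simp
    then show "\<bar>f n c - lim (\<lambda>n. f n c)\<bar> < e" using e by linarith
  qed
qed

lemma sum_sym_Suc:
  fixes F :: "int \<Rightarrow> real" shows
  "(\<Sum>i\<in>{- int (Suc n)..int (Suc n)}. F i) = (\<Sum>i\<in>{- int n..int n}. F i) + F (- int n - 1) + F (int n + 1)"
proof -
  have "{- int (Suc n)..int (Suc n)} = insert (- int n - 1) (insert (int n + 1) {- int n..int n})"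
    by auto
  then show ?thesis by (simp add: algebra_simps)
qed

lemma telescope_sym:
  fixes F :: "int \<Rightarrow> real" shows
  "(\<Sum>i\<in>{- int n..int n}. F (i+1) - F i) = F (int n + 1) - F (- int n)"
proof (induction n)
  case 0 show ?case by simp
next
  case (Suc n)
  have e: "- int n - 1 = - 1 - int n" by simp
  show ?case unfolding sum_sym_Suc Suc.IH by (simp add: algebra_simps e)
qed

lemma rho_n_add: "rho_n phi x z n = rho_n phi x y n + rho_n phi y z n"
  unfolding rho_n_def by (simp add: sum.distrib[symmetric])



definition udecay :: "(int \<Rightarrow> 'c \<Rightarrow> real) \<Rightarrow> bool" where
  "udecay G \<longleftrightarrow> (\<forall>e>0. \<exists>N::int. \<forall>i c. \<bar>i\<bar> > N \<longrightarrow> \<bar>G i c\<bar> < e)"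

lemma udecay_shift: "udecay G \<Longrightarrow> udecay (\<lambda>i c. G (i + t) c)"
  unfolding udecay_def
proof (intro allI impI)
  fix e :: real assume "\<forall>e>0. \<exists>N. \<forall>i c. N < \<bar>i\<bar> \<longrightarrow> \<bar>G i c\<bar> < e" "e > 0"
  then obtain N where N: "\<forall>i c. N < \<bar>i\<bar> \<longrightarrow> \<bar>G i c\<bar> < e" by blast
  show "\<exists>N. \<forall>i c. N < \<bar>i\<bar> \<longrightarrow> \<bar>G (i + t) c\<bar> < e"
  proof (intro exI allI impI)
    fix i c assume "N + \<bar>t\<bar> < \<bar>i\<bar>"
    then have "N < \<bar>i + t\<bar>" by arith
    then show "\<bar>G (i + t) c\<bar> < e" using N by blast
  qed
qed

lemma boundary_null:
  assumes "udecay H" "e > 0"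
  shows "\<exists>N. \<forall>n\<ge>N. \<forall>c. \<bar>H (int n + 1) c - H (- int n) c\<bar> < e"
proof -
  obtain N0 where N0: "\<forall>i c. N0 < \<bar>i\<bar> \<longrightarrow> \<bar>H i c\<bar> < e/2"
    using assms unfolding udecay_def by (meson half_gt_zero)
  show ?thesis
  proof (intro exI allI impI)
    fix n c assume "Suc (nat N0) \<le> n"
    then have "N0 < int n" by linarith
    then have "\<bar>H (int n + 1) c\<bar> < e/2" "\<bar>H (- int n) c\<bar> < e/2" using N0 by auto
    then show "\<bar>H (int n + 1) c - H (- int n) c\<bar> < e" by linarith
  qed
qed

lemma sum_shift1:
  fixes H :: "int \<Rightarrow> 'c \<Rightarrow> real" shows
  "(\<Sum>i\<in>{- int n..int n}. H (i + 1) c) = (\<Sum>i\<in>{- int n..int n}. H i c) + (H (int n + 1) c - H (- int n) c)"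
  using telescope_sym[of "\<lambda>i. H i c" n] by (simp add: sum_subtractf)

lemma shift_up:
  assumes "udecay H" "ucauchy (\<lambda>n c. \<Sum>i\<in>{- int n..int n}. H i c)"
  shows "ucauchy (\<lambda>n c. \<Sum>i\<in>{- int n..int n}. H (i + 1) c)"
  unfolding sum_shift1
  by (rule ucauchy_add_null[OF assms(2)]) (rule boundary_null[OF assms(1)])

lemma shift_down:
  assumes "udecay H" "ucauchy (\<lambda>n c. \<Sum>i\<in>{- int n..int n}. H (i + 1) c)"
  shows "ucauchy (\<lambda>n c. \<Sum>i\<in>{- int n..int n}. H i c)"
proof -
  have eq: "(\<Sum>i\<in>{- int n..int n}. H i c) = (\<Sum>i\<in>{- int n..int n}. H (i + 1) c) + (- (H (int n + 1) c - H (- int n) c))" for n c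
    unfolding sum_shift1 by simp
  have "\<exists>N. \<forall>n\<ge>N. \<forall>c. \<bar>- (H (int n + 1) c - H (- int n) c)\<bar> < e" if "e > 0" for e
    using boundary_null[OF assms(1) that] by (simp add: abs_minus_commute)
  then show ?thesis unfolding eq
    by (rule ucauchy_add_null[OF assms(2)])
qed

definition gfun :: "((int \<Rightarrow> 'e) \<Rightarrow> real) \<Rightarrow> 'e \<Rightarrow> 'e \<Rightarrow> int \<Rightarrow> (int \<Rightarrow> 'e) \<Rightarrow> real" where
  "gfun phi a b i v = phi (shift_pow i (set0 v a)) - phi (shift_pow i (set0 v b))"

definition Gfun :: "((int \<Rightarrow> 'e) \<Rightarrow> real) \<Rightarrow> int \<Rightarrow> (int \<Rightarrow> 'e) \<times> 'e \<times> 'e \<Rightarrow> real" where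
  "Gfun phi i c = gfun phi (fst (snd c)) (snd (snd c)) i (fst c)"

lemma decay:
  fixes phi :: "(int \<Rightarrow> 'e::finite) \<Rightarrow> real"
  assumes cont: "continuous_map Omega_top euclideanreal phi" and e: "e > 0"
  shows "\<exists>N::int. \<forall>x y i. (\<forall>k. \<bar>k\<bar> > M \<longrightarrow> x k = y k) \<longrightarrow> \<bar>i\<bar> > N \<longrightarrow>
           \<bar>phi (shift_pow i x) - phi (shift_pow i y)\<bar> < e"
proof -
  obtain N0 where N0: "\<forall>x y. (\<forall>k. \<bar>k\<bar> \<le> N0 \<longrightarrow> x k = y k) \<longrightarrow> \<bar>phi x - phi y\<bar> < e"
    using phi_unif[OF cont e] by blast
  show ?thesis
  proof (intro exI allI impI)
    fix x y :: "int \<Rightarrow> 'e" and i :: int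
    assume xy: "\<forall>k. M < \<bar>k\<bar> \<longrightarrow> x k = y k" and i: "N0 + \<bar>M\<bar> < \<bar>i\<bar>"
    have "shift_pow i x k = shift_pow i y k" if "\<bar>k\<bar> \<le> N0" for k
    proof -
      have "M < \<bar>k + i\<bar>" using i that by arith
      then show ?thesis using xy by (simp add: shift_pow_def)
    qed
    then show "\<bar>phi (shift_pow i x) - phi (shift_pow i y)\<bar> < e" using N0 by blast
  qed
qed

lemma Gdecay:
  fixes phi :: "(int \<Rightarrow> 'e::finite) \<Rightarrow> real"
  assumes cont: "continuous_map Omega_top euclideanreal phi"
  shows "udecay (Gfun phi)"
  unfolding udecay_def
proof (intro allI impI)
  fix e :: real assume e: "e > 0"
  obtain N where N: "\<forall>x y i. (\<forall>k. \<bar>k\<bar> > 0 \<longrightarrow> x k = y k) \<longrightarrow> \<bar>i\<bar> > N \<longrightarrow>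
           \<bar>phi (shift_pow i x) - phi (shift_pow i y)\<bar> < e"
    using decay[OF cont e, of 0] by blast
  show "\<exists>N. \<forall>i c. N < \<bar>i\<bar> \<longrightarrow> \<bar>Gfun phi i c\<bar> < e"
  proof (intro exI allI impI)
    fix i and c :: "(int \<Rightarrow> 'e) \<times> 'e \<times> 'e" assume "N < \<bar>i\<bar>"
    moreover have "\<forall>k. \<bar>k\<bar> > 0 \<longrightarrow> set0 (fst c) (fst (snd c)) k = set0 (fst c) (snd (snd c)) k"
      by (simp add: set0_def)
    ultimately show "\<bar>Gfun phi i c\<bar> < e" using N by (simp add: Gfun_def gfun_def)
  qed
qed

lemma ext_uc:
  fixes phi :: "(int \<Rightarrow> 'e::finite) \<Rightarrow> real"
  assumes ext: "extensible phi"
  shows "ucauchy (\<lambda>n c. \<Sum>i\<in>{- int n..int n}. Gfun phi i c)"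
  unfolding ucauchy_def
proof (intro allI impI)
  fix e :: real assume e: "e > 0"
  have "\<exists>N. \<forall>m\<ge>N. \<forall>n\<ge>N. \<forall>v. \<bar>(\<Sum>i\<in>{- int m..int m}. gfun phi (fst ab) (snd ab) i v)
          - (\<Sum>i\<in>{- int n..int n}. gfun phi (fst ab) (snd ab) i v)\<bar> < e" for ab :: "'e \<times> 'e"
  proof -
    have "uniformly_Cauchy_on UNIV (\<lambda>(n::nat) w. \<Sum>i\<in>{- int n..int n}. gfun phi (fst ab) (snd ab) i w)"
      using ext unfolding extensible_def gfun_def by (intro uniformly_convergent_Cauchy) blast
    then show ?thesis using e unfolding uniformly_Cauchy_on_def dist_real_def by blast
  qed
  then obtain Nf where Nf: "\<And>ab. \<forall>m\<ge>Nf ab. \<forall>n\<ge>Nf ab. \<forall>v. \<bar>(\<Sum>i\<in>{- int m..int m}. gfun phi (fst ab) (snd ab) i v)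
          - (\<Sum>i\<in>{- int n..int n}. gfun phi (fst ab) (snd ab) i v)\<bar> < e" by metis
  define N where "N = Max (range Nf)"
  have NfN: "Nf ab \<le> N" for ab unfolding N_def by (rule Max_ge) auto
  show "\<exists>N. \<forall>m\<ge>N. \<forall>n\<ge>N. \<forall>c. \<bar>(\<Sum>i\<in>{- int m..int m}. Gfun phi i c) - (\<Sum>i\<in>{- int n..int n}. Gfun phi i c)\<bar> < e"
  proof (intro exI allI impI)
    fix m n and c :: "(int \<Rightarrow> 'e) \<times> 'e \<times> 'e" assume "N \<le> m" "N \<le> n"
    then have "Nf (snd c) \<le> m" "Nf (snd c) \<le> n" using NfN[of "snd c"] by auto
    then show "\<bar>(\<Sum>i\<in>{- int m..int m}. Gfun phi i c) - (\<Sum>i\<in>{- int n..int n}. Gfun phi i c)\<bar> < e"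
      using Nf[of "snd c"] unfolding Gfun_def by blast
  qed
qed

lemma shifted_uc:
  fixes phi :: "(int \<Rightarrow> 'e::finite) \<Rightarrow> real"
  assumes cont: "continuous_map Omega_top euclideanreal phi" and ext: "extensible phi"
  shows "ucauchy (\<lambda>n c. \<Sum>i\<in>{- int n..int n}. Gfun phi (i + s) c)"
proof (induction s rule: int_induct[where k=0])
  case base
  then show ?case using ext_uc[OF ext] by simp
next
  case (step1 s)
  have "ucauchy (\<lambda>n c. \<Sum>i\<in>{- int n..int n}. Gfun phi (i + 1 + s) c)"
    using shift_up[OF udecay_shift[OF Gdecay[OF cont], of s] step1(2)] .
  then show ?case by (simp add: add_ac)
next
  case (step2 s)
  have "ucauchy (\<lambda>n c. \<Sum>i\<in>{- int n..int n}. Gfun phi (i + (s - 1)) c)"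
    by (rule shift_down[OF udecay_shift[OF Gdecay[OF cont], of "s - 1"]]) (use step2(2) in \<open>simp add: algebra_simps\<close>)
  then show ?case by simp
qed



lemma shift_pow_upd: "shift_pow i (w(j := a)) = shift_pow (i + - j) (set0 (shift_pow j w) a)"
  by (auto simp: shift_pow_def set0_def fun_eq_iff)

lemma single_uc:
  fixes phi :: "(int \<Rightarrow> 'e::finite) \<Rightarrow> real"
  assumes cont: "continuous_map Omega_top euclideanreal phi" and ext: "extensible phi"
  shows "ucauchy (\<lambda>n c. rho_n phi ((w c)(j := a c)) ((w c)(j := b c)) n)"
proof -
  have eq: "rho_n phi ((w c)(j := a c)) ((w c)(j := b c)) n
      = (\<Sum>i\<in>{- int n..int n}. Gfun phi (i + - j) (shift_pow j (w c), a c, b c))" for n c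
    by (simp add: rho_n_def Gfun_def gfun_def shift_pow_upd)
  show ?thesis unfolding eq
    using ucauchy_comp[OF shifted_uc[OF cont ext, of "-j"], of "\<lambda>c. (shift_pow j (w c), a c, b c)"]
    by simp
qed

lemma fin_diff:
  fixes phi :: "(int \<Rightarrow> 'e::finite) \<Rightarrow> real"
  assumes cont: "continuous_map Omega_top euclideanreal phi" and ext: "extensible phi"
    and fin: "finite D"
  shows "\<forall>(X::'c \<Rightarrow> int \<Rightarrow> 'e) Y. (\<forall>c k. k \<notin> D \<longrightarrow> X c k = Y c k) \<longrightarrow> ucauchy (\<lambda>n c. rho_n phi (X c) (Y c) n)"
  using fin
proof (induction D)
  case empty
  show ?case
  proof (intro allI impI)
    fix X Y :: "'c \<Rightarrow> int \<Rightarrow> 'e" assume "\<forall>c k. k \<notin> {} \<longrightarrow> X c k = Y c k"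
    then have "X c = Y c" for c by (simp add: fun_eq_iff)
    then show "ucauchy (\<lambda>n c. rho_n phi (X c) (Y c) n)"
      by (simp add: ucauchy_def rho_n_def)
  qed
next
  case (insert j D)
  show ?case
  proof (intro allI impI)
    fix X Y :: "'c \<Rightarrow> int \<Rightarrow> 'e" assume H: "\<forall>c k. k \<notin> insert j D \<longrightarrow> X c k = Y c k"
    define Z where "Z c = (X c)(j := Y c j)" for c
    have "\<forall>c k. k \<notin> D \<longrightarrow> Z c k = Y c k" using H by (auto simp: Z_def)
    then have uc2: "ucauchy (\<lambda>n c. rho_n phi (Z c) (Y c) n)" using insert.IH by blast
    have eq1: "(\<lambda>n c. rho_n phi (X c) (Z c) n) = (\<lambda>n c. rho_n phi ((X c)(j := X c j)) ((X c)(j := Y c j)) n)"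
      by (simp add: Z_def)
    have uc1: "ucauchy (\<lambda>n c. rho_n phi (X c) (Z c) n)"
      unfolding eq1 by (rule single_uc[OF cont ext])
    show "ucauchy (\<lambda>n c. rho_n phi (X c) (Y c) n)"
    proof -
      have "rho_n phi (X c) (Y c) n = rho_n phi (X c) (Z c) n + rho_n phi (Z c) (Y c) n" for n c
        by (rule rho_n_add)
      then show ?thesis using ucauchy_add[OF uc1 uc2] by simp
    qed
  qed
qed

lemma conv_rho:
  fixes phi :: "(int \<Rightarrow> 'e::finite) \<Rightarrow> real"
  assumes cont: "continuous_map Omega_top euclideanreal phi" and ext: "extensible phi"
    and fin: "finite {k. xi k \<noteq> eta k}"
  shows "convergent (rho_n phi xi eta)" "rho_n phi xi eta \<longlonglongrightarrow> rho phi xi eta"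
proof -
  have H: "\<forall>(X::unit \<Rightarrow> int \<Rightarrow> 'e) Y. (\<forall>c k. k \<notin> {k. xi k \<noteq> eta k} \<longrightarrow> X c k = Y c k)
      \<longrightarrow> ucauchy (\<lambda>n c. rho_n phi (X c) (Y c) n)"
    by (rule fin_diff[OF cont ext fin])
  have "ucauchy (\<lambda>n (c::unit). rho_n phi ((\<lambda>_. xi) c) ((\<lambda>_. eta) c) n)"
    by (rule H[rule_format]) simp
  then have "ucauchy (\<lambda>n (c::unit). rho_n phi xi eta n)" by simp
  from ucauchy_conv[OF this] show c: "convergent (rho_n phi xi eta)" by simp
  then show "rho_n phi xi eta \<longlonglongrightarrow> rho phi xi eta"
    by (simp add: rho_def convergent_LIMSEQ_iff)
qed



theorem proposition4p1:
  fixes phi :: "(int \<Rightarrow> 'e::finite) \<Rightarrow> real"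
  assumes "continuous_map Omega_top euclideanreal phi"
    and "extensible phi"
  shows "(\<forall>xi eta. finite {k. xi k \<noteq> eta k} \<longrightarrow> convergent (rho_n phi xi eta))
    \<and> (\<forall>xi eta zeta. finite {i. xi i \<noteq> eta i \<or> eta i \<noteq> zeta i} \<longrightarrow>
          rho phi xi zeta = rho phi xi eta + rho phi eta zeta)
    \<and> (\<forall>xi eta. finite {k. xi k \<noteq> eta k} \<longrightarrow> rho phi xi eta = rho phi (shift xi) (shift eta))
    \<and> (\<forall>L eta zeta. finite L \<longrightarrow>
          continuous_map Omega_top euclideanreal (\<lambda>xi. rho phi (glue L eta xi) (glue L zeta xi)))"
proof (intro conjI allI impI)
  note cont = assms(1) and ext = assms(2)
  fix xi eta :: "int \<Rightarrow> 'e"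
  assume "finite {k. xi k \<noteq> eta k}"
  then show "convergent (rho_n phi xi eta)" by (rule conv_rho[OF cont ext])
next
  note cont = assms(1) and ext = assms(2)
  fix xi eta zeta :: "int \<Rightarrow> 'e"
  assume fin: "finite {i. xi i \<noteq> eta i \<or> eta i \<noteq> zeta i}"
  have f1: "finite {k. xi k \<noteq> eta k}" by (rule finite_subset[OF _ fin]) auto
  have f2: "finite {k. eta k \<noteq> zeta k}" by (rule finite_subset[OF _ fin]) auto
  have f3: "finite {k. xi k \<noteq> zeta k}" by (rule finite_subset[OF _ fin]) auto
  have "(\<lambda>n. rho_n phi xi eta n + rho_n phi eta zeta n) \<longlonglongrightarrow> rho phi xi eta + rho phi eta zeta"
    by (intro tendsto_add conv_rho(2)[OF cont ext f1] conv_rho(2)[OF cont ext f2])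
  then have "rho_n phi xi zeta \<longlonglongrightarrow> rho phi xi eta + rho phi eta zeta"
    by (simp add: rho_n_add[symmetric])
  moreover have "rho_n phi xi zeta \<longlonglongrightarrow> rho phi xi zeta" by (rule conv_rho(2)[OF cont ext f3])
  ultimately show "rho phi xi zeta = rho phi xi eta + rho phi eta zeta"
    using LIMSEQ_unique by blast
next
  note cont = assms(1) and ext = assms(2)
  fix xi eta :: "int \<Rightarrow> 'e"
  assume fin: "finite {k. xi k \<noteq> eta k}"
  define M where "M = Max (insert 0 (abs ` {k. xi k \<noteq> eta k}))"
  have M: "\<forall>k. \<bar>k\<bar> > M \<longrightarrow> xi k = eta k"
  proof (intro allI impI)
    fix k assume k: "\<bar>k\<bar> > M"
    show "xi k = eta k"
    proof (rule ccontr)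
      assume "xi k \<noteq> eta k"
      then have "\<bar>k\<bar> \<le> M" unfolding M_def using fin by (intro Max_ge) auto
      with k show False by simp
    qed
  qed
  define d where "d i = phi (shift_pow i xi) - phi (shift_pow i eta)" for i
  have sh: "shift_pow i (shift x) = shift_pow (i + 1) x" for i and x :: "int \<Rightarrow> 'e"
    by (simp add: shift_pow_def shift_def ac_simps)
  have eq: "rho_n phi (shift xi) (shift eta) n = rho_n phi xi eta n + (d (int n + 1) - d (- int n))" for n
  proof -
    have "rho_n phi (shift xi) (shift eta) n = (\<Sum>i\<in>{- int n..int n}. d (i + 1))"
      by (simp add: rho_n_def sh d_def)
    also have "\<dots> = (\<Sum>i\<in>{- int n..int n}. d i) + (d (int n + 1) - d (- int n))"
      using sum_shift1[where H="\<lambda>i (c::unit). d i" and c="()" and n=n] by simp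
    also have "(\<Sum>i\<in>{- int n..int n}. d i) = rho_n phi xi eta n"
      by (simp add: rho_n_def d_def)
    finally show ?thesis .
  qed
  have ud: "udecay (\<lambda>i (c::unit). d i)"
    unfolding udecay_def d_def using decay[OF cont, of _ M] M by blast
  have "(\<lambda>n. d (int n + 1) - d (- int n)) \<longlonglongrightarrow> 0"
  proof (rule LIMSEQ_I)
    fix r :: real assume "r > 0"
    from boundary_null[OF ud this] show "\<exists>no. \<forall>n\<ge>no. norm (d (int n + 1) - d (- int n) - 0) < r"
      by simp
  qed
  then have "(\<lambda>n. rho_n phi xi eta n + (d (int n + 1) - d (- int n))) \<longlonglongrightarrow> rho phi xi eta + 0"
    by (intro tendsto_add conv_rho(2)[OF cont ext fin])
  then have "rho_n phi (shift xi) (shift eta) \<longlonglongrightarrow> rho phi xi eta"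
    by (simp add: eq[abs_def])
  then show "rho phi xi eta = rho phi (shift xi) (shift eta)"
    unfolding rho_def[of phi "shift xi"] by (simp add: limI)
next
  note cont = assms(1) and ext = assms(2)
  fix L :: "int set" and eta zeta :: "int \<Rightarrow> 'e"
  assume finL: "finite L"
  define f where "f n xi = rho_n phi (glue L eta xi) (glue L zeta xi) n" for n xi
  have H: "\<forall>(X::(int \<Rightarrow> 'e) \<Rightarrow> int \<Rightarrow> 'e) Y. (\<forall>c k. k \<notin> L \<longrightarrow> X c k = Y c k)
      \<longrightarrow> ucauchy (\<lambda>n c. rho_n phi (X c) (Y c) n)"
    by (rule fin_diff[OF cont ext finL])
  have uc: "ucauchy f"
    unfolding f_def by (rule H[rule_format]) (simp add: glue_def)
  have cs: "continuous_map Omega_top Omega_top (\<lambda>xi::int \<Rightarrow> 'e. shift_pow i (glue L th xi))" for i th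
    unfolding Omega_top_def shift_pow_def glue_def continuous_map_componentwise_UNIV
  proof
    fix k
    show "continuous_map (product_topology (\<lambda>_. discrete_topology UNIV) UNIV) (discrete_topology UNIV)
        (\<lambda>x. if k + i \<in> L then th (k + i) else x (k + i))"
      using continuous_map_product_projection[of "k+i" UNIV "\<lambda>_. discrete_topology (UNIV::'e set)"]
      by (cases "k + i \<in> L") simp_all
  qed
  have cphi: "continuous_map Omega_top euclideanreal (\<lambda>xi. phi (shift_pow i (glue L th xi)))" for i th
    using continuous_map_compose[OF cs cont] by (simp add: o_def)
  have cf: "continuous_map Omega_top euclideanreal (f n)" for n
    unfolding f_def rho_n_def
    by (intro continuous_map_sum continuous_map_diff cphi) auto
  have "continuous_map Omega_top Met_TC.mtopology (\<lambda>xi. lim (\<lambda>n. f n xi))"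
  proof (rule Met_TC.continuous_map_uniform_limit[where F=sequentially and f=f])
    show "\<forall>\<^sub>F n in sequentially. continuous_map Omega_top Met_TC.mtopology (f n)"
      using cf by simp
    fix e :: real assume e: "0 < e"
    obtain N where N: "\<forall>n\<ge>N. \<forall>c. \<bar>f n c - lim (\<lambda>n. f n c)\<bar> < e"
      using ucauchy_unif[OF uc e] by blast
    show "\<forall>\<^sub>F n in sequentially. \<forall>x\<in>topspace Omega_top. lim (\<lambda>n. f n x) \<in> UNIV \<and> dist (f n x) (lim (\<lambda>n. f n x)) < e"
      unfolding eventually_sequentially dist_real_def using N by blast
  qed simp
  then show "continuous_map Omega_top euclideanreal (\<lambda>xi. rho phi (glue L eta xi) (glue L zeta xi))"
    by (simp add: rho_def f_def[abs_def])
qed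

end
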